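(* Let $P(t)=\{\mathbf{x}\in\mathbb{R}^d:\mathbf{w}_i\cdot\mathbf{x}+b_i+s_it\ge0\ \forall i\in[k]\}$ be a polytope that expands with time, its bounding halfspaces moving outwards each at its own constant speed $s_i\ge0$ (with $\|\mathbf{w}_i\|=1$). Then at each combinatorial change of $P$, the Hausdorff speed of $P$ either stays the same or decreases; that is, if $t_1$ is a time of combinatorial change, the Hausdorff speed on the time interval immediately after $t_1$ is at most the Hausdorff speed on the time interval immediately before $t_1$.
   Context: For $S\subseteq\mathbb{R}^d$ and $\mathbf{p}\in\mathbb{R}^d$, $\delta_{\mathbf{p}}(S)=\inf_{\mathbf{q}\in S}\|\mathbf{p}-\mathbf{q}\|$. The Hausdorff distance is $\delta(S_1,S_2)=\max\{\sup_{\mathbf{p}\in S_1}\delta_{\mathbf{p}}(S_2),\sup_{\mathbf{p}\in S_2}\delta_{\mathbf{p}}(S_1)\}$. The Hausdorff speed of $P$ at time $t$ is $\lim_{\gamma\to0}\delta(P(t),P(t+\gamma))/\gamma$. A combinatorial change is a time at which the face structure of $P(t)$ changes (some faces disappear and others appear in their stead); between consecutive combinatorial changes the Hausdorff speed is constant. *)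

theory Defs
  imports "HOL-Analysis.Analysis"
begin

text \<open>Hausdorff distance, as in the paper (via the library's infdist,
  which is the infimum of distances to a set).  Meaningful for nonempty
  bounded sets.\<close>
definition hausdorff_dist :: "'a::metric_space set \<Rightarrow> 'a set \<Rightarrow> real" where
  "hausdorff_dist S1 S2 =
     max (SUP p\<in>S1. infdist p S2) (SUP p\<in>S2. infdist p S1)"

definition mpoly :: "nat \<Rightarrow> (nat \<Rightarrow> 'a::euclidean_space) \<Rightarrow> (nat \<Rightarrow> real)
    \<Rightarrow> (nat \<Rightarrow> real) \<Rightarrow> real \<Rightarrow> 'a set" where
  "mpoly k w b s t = {x. \<forall>i<k. w i \<bullet> x + b i + s i * t \<ge> 0}"

definition has_hausdorff_speed :: "(real \<Rightarrow> 'a::metric_space set) \<Rightarrow> real \<Rightarrow> real \<Rightarrow> bool" where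
  "has_hausdorff_speed P t v \<longleftrightarrow>
     ((\<lambda>g. hausdorff_dist (P t) (P (t + g)) / g) \<longlongrightarrow> v) (at_right 0)"

text \<open>Each nonempty
  face corresponds to the active set of its relative interior points.\<close>
definition face_structure :: "nat \<Rightarrow> (nat \<Rightarrow> 'a::euclidean_space) \<Rightarrow> (nat \<Rightarrow> real)
    \<Rightarrow> (nat \<Rightarrow> real) \<Rightarrow> real \<Rightarrow> nat set set" where
  "face_structure k w b s t =
     {I. \<exists>x\<in>mpoly k w b s t. I = {i. i < k \<and> w i \<bullet> x + b i + s i * t = 0}}"

definition combinatorial_change :: "nat \<Rightarrow> (nat \<Rightarrow> 'a::euclidean_space) \<Rightarrow> (nat \<Rightarrow> real)
    \<Rightarrow> (nat \<Rightarrow> real) \<Rightarrow> real \<Rightarrow> bool" where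
  "combinatorial_change k w b s t1 \<longleftrightarrow>
     \<not> (\<exists>e>0. \<forall>t\<in>{t1 - e<..<t1 + e}.
            face_structure k w b s t = face_structure k w b s t1)"

end

theory Submission
  imports Defs
begin

lemma mpoly_comb:
  assumes "x \<in> mpoly k w b s t1" "y \<in> mpoly k w b s t2" "0 \<le> l" "l \<le> 1"
  shows "l *\<^sub>R x + (1 - l) *\<^sub>R y \<in> mpoly k w b s (l * t1 + (1 - l) * t2)"
proof -
  have "0 \<le> w i \<bullet> (l *\<^sub>R x + (1 - l) *\<^sub>R y) + b i + s i * (l * t1 + (1 - l) * t2)" if "i < k" for i
  proof -
    have a: "0 \<le> w i \<bullet> x + b i + s i * t1" "0 \<le> w i \<bullet> y + b i + s i * t2"
      using assms that by (auto simp: mpoly_def)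
    have "w i \<bullet> (l *\<^sub>R x + (1 - l) *\<^sub>R y) + b i + s i * (l * t1 + (1 - l) * t2)
        = l * (w i \<bullet> x + b i + s i * t1) + (1 - l) * (w i \<bullet> y + b i + s i * t2)"
      by (simp add: inner_add_right algebra_simps)
    also have "\<dots> \<ge> 0" using a assms by simp
    finally show ?thesis .
  qed
  then show ?thesis by (simp add: mpoly_def)
qed

lemma mpoly_mono:
  assumes "\<And>i. i < k \<Longrightarrow> s i \<ge> 0" "t \<le> t'"
  shows "mpoly k w b s t \<subseteq> mpoly k w b s t'"
proof
  fix x assume x: "x \<in> mpoly k w b s t"
  have "0 \<le> w i \<bullet> x + b i + s i * t'" if "i < k" for i
  proof -
    have "s i * t \<le> s i * t'" using assms that by (simp add: mult_left_mono)
    moreover have "0 \<le> w i \<bullet> x + b i + s i * t" using x that by (auto simp: mpoly_def)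
    ultimately show ?thesis by linarith
  qed
  then show "x \<in> mpoly k w b s t'" by (simp add: mpoly_def)
qed

lemma mpoly_closed: "closed (mpoly k w b s t)"
proof -
  have "mpoly k w b s t = (\<Inter>i\<in>{..<k}. {x. 0 \<le> w i \<bullet> x + b i + s i * t})"
    by (auto simp: mpoly_def)
  moreover have "closed {x. 0 \<le> w i \<bullet> x + b i + s i * t}" for i
    by (intro closed_Collect_le continuous_intros)
  ultimately show ?thesis by auto
qed

lemma mpoly_convex: "convex (mpoly k w b s t)"
proof (rule convexI)
  fix x y and u v :: real
  assume a: "x \<in> mpoly k w b s t" "y \<in> mpoly k w b s t" "0 \<le> u" "0 \<le> v" "u + v = 1"
  show "u *\<^sub>R x + v *\<^sub>R y \<in> mpoly k w b s t"
  proof -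
    have e1: "1 - u = v" using a(5) by simp
    have e2: "u * t + (1 - u) * t = t" by (simp add: algebra_simps)
    have "u *\<^sub>R x + (1 - u) *\<^sub>R y \<in> mpoly k w b s (u * t + (1 - u) * t)"
      using a by (intro mpoly_comb) auto
    then show ?thesis unfolding e2 unfolding e1 .
  qed
qed

lemma infdist_bdd:
  fixes S :: "'a::real_normed_vector set"
  assumes "bounded S" "A \<noteq> {}"
  shows "bdd_above ((\<lambda>p. infdist p A) ` S)"
proof -
  obtain a where a: "a \<in> A" using assms by auto
  obtain B where B: "\<And>x. x \<in> S \<Longrightarrow> norm x \<le> B" using assms bounded_iff by metis
  have "infdist p A \<le> B + norm a" if "p \<in> S" for p
  proof -
    have "infdist p A \<le> dist p a" using a by (rule infdist_le)
    also have "\<dots> \<le> norm p + norm a" by (simp add: dist_norm norm_triangle_ineq4)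
    finally show ?thesis using B[OF that] by linarith
  qed
  then show ?thesis by (rule bdd_aboveI2)
qed

lemma key_point:
  assumes sp: "\<And>i. i < k \<Longrightarrow> s i \<ge> 0"
    and bd: "bounded (mpoly k w b s tb)"
    and ne_b: "mpoly k w b s tb \<noteq> {}"
    and ne_a: "mpoly k w b s ta \<noteq> {}"
    and lt: "tb < ta" and g: "g > 0"
    and p: "p \<in> mpoly k w b s (ta + g)"
  shows "\<exists>q\<in>mpoly k w b s (tb + g). infdist p (mpoly k w b s ta) \<le> infdist q (mpoly k w b s tb)"
proof (cases "p \<in> mpoly k w b s ta")
  case True
  obtain q where q: "q \<in> mpoly k w b s tb" using ne_b by auto
  have "mpoly k w b s tb \<subseteq> mpoly k w b s (tb + g)" using g by (intro mpoly_mono sp) auto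
  then show ?thesis using True q by (intro bexI[of _ q]) (auto simp: infdist_nonneg)
next
  case False
  let ?A = "mpoly k w b s ta" and ?B = "mpoly k w b s tb"
  obtain a0 where a0: "a0 \<in> ?A" "\<And>y. y \<in> ?A \<Longrightarrow> dist p a0 \<le> dist p y"
    using distance_attains_inf[OF mpoly_closed ne_a] by metis
  define v where "v = p - a0"
  have vnz: "v \<noteq> 0" using False a0 by (auto simp: v_def)
  have proj: "v \<bullet> (y - a0) \<le> 0" if "y \<in> ?A" for y
    using any_closest_point_dot[OF mpoly_convex mpoly_closed a0(1) that] a0(2) by (auto simp: v_def)
  have "compact ?B" using bd mpoly_closed compact_eq_bounded_closed by blast
  then obtain m where m: "m \<in> ?B" "\<And>y. y \<in> ?B \<Longrightarrow> v \<bullet> y \<le> v \<bullet> m"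
  proof -
    have "continuous_on ?B (\<lambda>x. v \<bullet> x)" by (intro continuous_intros)
    then show ?thesis using continuous_attains_sup[OF \<open>compact ?B\<close> ne_b, of "\<lambda>x. v \<bullet> x"] that by blast
  qed
  define L where "L = (ta - tb) + g"
  have Lpos: "L > 0" using lt g by (simp add: L_def)
  define l where "l = g / L"
  have l01: "0 \<le> l" "l \<le> 1" using Lpos g lt by (auto simp: l_def L_def)
  have 1: "l *\<^sub>R m + (1 - l) *\<^sub>R p \<in> ?A"
  proof -
    have "l * tb + (1 - l) * (ta + g) = ta"
    proof -
      have lL1: "l * L = g" using Lpos by (simp add: l_def)
      have lL2: "(1 - l) * L = ta - tb" using lL1 by (simp add: left_diff_distrib L_def)
      note lL = lL1 lL2
      have "(l * tb + (1 - l) * (ta + g)) * L = (l * L) * tb + ((1 - l) * L) * (ta + g)"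
        by (simp add: algebra_simps)
      also have "\<dots> = ta * L" unfolding lL by (simp add: L_def algebra_simps)
      finally have "(l * tb + (1 - l) * (ta + g)) * L = ta * L" .
      then show ?thesis using Lpos by simp
    qed
    then show ?thesis using mpoly_comb[OF m(1) p l01] by simp
  qed
  define q where "q = (1 - l) *\<^sub>R m + l *\<^sub>R p"
  have q: "q \<in> mpoly k w b s (tb + g)"
  proof -
    have "(1 - l) * tb + (1 - (1 - l)) * (ta + g) = tb + g"
    proof -
      have lL1: "l * L = g" using Lpos by (simp add: l_def)
      have lL2: "(1 - l) * L = ta - tb" using lL1 by (simp add: left_diff_distrib L_def)
      note lL = lL1 lL2
      have "((1 - l) * tb + (1 - (1 - l)) * (ta + g)) * L = ((1 - l) * L) * tb + (l * L) * (ta + g)"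
        by (simp add: algebra_simps)
      also have "\<dots> = (tb + g) * L" unfolding lL by (simp add: L_def algebra_simps)
      finally have "((1 - l) * tb + (1 - (1 - l)) * (ta + g)) * L = (tb + g) * L" .
      then show ?thesis using Lpos by simp
    qed
    then show ?thesis using mpoly_comb[OF m(1) p, of "1 - l"] l01 by (simp add: q_def)
  qed
  have vv: "v \<bullet> v \<le> v \<bullet> q - v \<bullet> m"
  proof -
    have "v \<bullet> (l *\<^sub>R m + (1 - l) *\<^sub>R p) \<le> v \<bullet> a0" using proj[OF 1] by (simp add: inner_diff_right)
    then have "l * (v \<bullet> m) + (1 - l) * (v \<bullet> p) \<le> v \<bullet> a0" by (simp add: inner_add_right)
    moreover have "v \<bullet> v = v \<bullet> p - v \<bullet> a0" by (simp add: v_def inner_diff_right)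
    moreover have "v \<bullet> q - v \<bullet> m = l * (v \<bullet> p - v \<bullet> m)" by (simp add: q_def inner_add_right algebra_simps)
    ultimately show ?thesis by (simp add: algebra_simps)
  qed
  have dd: "norm v \<le> dist q a" if a: "a \<in> ?B" for a
  proof -
    have "v \<bullet> v \<le> v \<bullet> (q - a)" using vv m(2)[OF a] by (simp add: inner_diff_right)
    also have "\<dots> \<le> norm v * norm (q - a)" by (rule Cauchy_Schwarz_ineq2[THEN order_trans[OF abs_ge_self]])
    finally have "norm v * norm v \<le> norm v * norm (q - a)" by (simp add: power2_eq_square flip: power2_norm_eq_inner)
    then show "norm v \<le> dist q a" using vnz by (simp add: dist_norm)
  qed
  have "norm v \<le> infdist q ?B"
    unfolding infdist_def using ne_b dd by (simp add: cINF_greatest)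
  moreover have "infdist p ?A \<le> norm v" using infdist_le[OF a0(1), of p] by (simp add: v_def dist_norm)
  ultimately show ?thesis using q by force
qed

lemma H_le:
  assumes sp: "\<And>i. i < k \<Longrightarrow> s i \<ge> 0"
    and bd: "\<And>t. bounded (mpoly k w b s t)"
    and ne_b: "mpoly k w b s tb \<noteq> {}"
    and ne_a: "mpoly k w b s ta \<noteq> {}"
    and lt: "tb < ta" and g: "g > 0"
  shows "hausdorff_dist (mpoly k w b s ta) (mpoly k w b s (ta + g))
         \<le> hausdorff_dist (mpoly k w b s tb) (mpoly k w b s (tb + g))"
proof -
  let ?Pb = "mpoly k w b s tb" and ?Pb' = "mpoly k w b s (tb + g)"
  let ?Pa = "mpoly k w b s ta" and ?Pa' = "mpoly k w b s (ta + g)"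
  have subb: "?Pb \<subseteq> ?Pb'" using g by (intro mpoly_mono sp) auto
  have suba: "?Pa \<subseteq> ?Pa'" using g by (intro mpoly_mono sp) auto
  have ne_b': "?Pb' \<noteq> {}" and ne_a': "?Pa' \<noteq> {}" using subb suba ne_a ne_b by auto
  define Rb where "Rb = (SUP q\<in>?Pb'. infdist q ?Pb)"
  have bdd: "bdd_above ((\<lambda>q. infdist q ?Pb) ` ?Pb')" by (rule infdist_bdd[OF bd ne_b])
  have Rb_ge: "infdist q ?Pb \<le> Rb" if "q \<in> ?Pb'" for q
    unfolding Rb_def by (rule cSUP_upper[OF that bdd])
  have Hb: "Rb \<le> hausdorff_dist ?Pb ?Pb'" unfolding hausdorff_dist_def Rb_def by (rule max.cobounded2)
  obtain q0 where q0: "q0 \<in> ?Pb" using ne_b by auto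
  have "q0 \<in> ?Pb'" using q0 subb by blast
  then have R0: "0 \<le> Rb" using Rb_ge[of q0] infdist_nonneg[of q0 ?Pb] by linarith
  have s1: "(SUP p\<in>?Pa. infdist p ?Pa') \<le> Rb"
  proof (rule cSUP_least[OF ne_a])
    fix p assume "p \<in> ?Pa"
    then have "p \<in> ?Pa'" using suba by blast
    then show "infdist p ?Pa' \<le> Rb" using R0 by simp
  qed
  have s2: "(SUP p\<in>?Pa'. infdist p ?Pa) \<le> Rb"
  proof (rule cSUP_least[OF ne_a'])
    fix p assume "p \<in> ?Pa'"
    then obtain q where q: "q \<in> ?Pb'" "infdist p ?Pa \<le> infdist q ?Pb"
      using key_point[OF sp bd ne_b ne_a lt g] by blast
    then show "infdist p ?Pa \<le> Rb" using Rb_ge[OF q(1)] by linarith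
  qed
  have "hausdorff_dist ?Pa ?Pa' \<le> Rb" unfolding hausdorff_dist_def using s1 s2 by (rule max.boundedI)
  then show ?thesis using Hb by linarith
qed

theorem lemma13:
  fixes w :: "nat \<Rightarrow> 'a::euclidean_space" and b s :: "nat \<Rightarrow> real"
    and k :: nat and t1 e v1 v2 :: real
  assumes unit: "\<And>i. i < k \<Longrightarrow> norm (w i) = 1"
    and speeds: "\<And>i. i < k \<Longrightarrow> s i \<ge> 0"
    and polytope: "\<And>t. bounded (mpoly k w b s t)"
    and nonempty: "\<And>t. t \<in> {t1 - e<..<t1 + e} \<Longrightarrow> mpoly k w b s t \<noteq> {}"
    and e_pos: "e > 0"
    and change: "combinatorial_change k w b s t1"
    and no_change_before: "\<And>t. t \<in> {t1 - e<..<t1} \<Longrightarrow> \<not> combinatorial_change k w b s t"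
    and no_change_after: "\<And>t. t \<in> {t1<..<t1 + e} \<Longrightarrow> \<not> combinatorial_change k w b s t"
    and before: "\<And>t. t \<in> {t1 - e<..<t1} \<Longrightarrow> has_hausdorff_speed (mpoly k w b s) t v1"
    and after: "\<And>t. t \<in> {t1<..<t1 + e} \<Longrightarrow> has_hausdorff_speed (mpoly k w b s) t v2"
  shows "v2 \<le> v1"
proof -
  define tb where "tb = t1 - e / 2"
  define ta where "ta = t1 + e / 2"
  have tbI: "tb \<in> {t1 - e<..<t1}" and taI: "ta \<in> {t1<..<t1 + e}" using e_pos by (auto simp: tb_def ta_def)
  have neb: "mpoly k w b s tb \<noteq> {}" using nonempty tbI by auto
  have nea: "mpoly k w b s ta \<noteq> {}" using nonempty taI by auto
  have lt: "tb < ta" using e_pos by (simp add: tb_def ta_def)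
  have lb: "((\<lambda>g. hausdorff_dist (mpoly k w b s tb) (mpoly k w b s (tb + g)) / g) \<longlongrightarrow> v1) (at_right 0)"
    using before[OF tbI] by (simp add: has_hausdorff_speed_def)
  have la: "((\<lambda>g. hausdorff_dist (mpoly k w b s ta) (mpoly k w b s (ta + g)) / g) \<longlongrightarrow> v2) (at_right 0)"
    using after[OF taI] by (simp add: has_hausdorff_speed_def)
  have ev: "\<forall>\<^sub>F g in at_right 0. hausdorff_dist (mpoly k w b s ta) (mpoly k w b s (ta + g)) / g
      \<le> hausdorff_dist (mpoly k w b s tb) (mpoly k w b s (tb + g)) / g"
    using eventually_at_right_less[of "0::real"]
  proof (rule eventually_mono)
    fix g :: real assume "0 < g"
    then show "hausdorff_dist (mpoly k w b s ta) (mpoly k w b s (ta + g)) / g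
      \<le> hausdorff_dist (mpoly k w b s tb) (mpoly k w b s (tb + g)) / g"
      using H_le[OF speeds polytope neb nea lt] by (simp add: divide_right_mono)
  qed
  show ?thesis using tendsto_le[OF trivial_limit_at_right_real lb la ev] .
qed

end
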